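(* Consider the contextual bandit problem with finite policy class $\Theta$ and $K$ actions. For any sequence $(x_1,\boldsymbol{c}_1),\ldots,(x_T,\boldsymbol{c}_T)$, EXP4 with its learning rate $\eta'$ tuned appropriately as a function of $T,K,|\Theta|$ and the given range bound $\rho_T$ is $\big(\tfrac12,\mathcal{O}(\sqrt{KT\ln|\Theta|})\big)$-weakly-stable.
   Context: Contextual bandits: on each round $t=1,\ldots,T$ a context $x_t$ is revealed, the learner picks a policy $\theta_t\in\Theta$, each policy being a map $\theta:\mathcal{X}\to[K]$, and the loss is $f_t(\theta,x)=c_{t,\theta(x)}$ for $\boldsymbol{c}_t\in[0,1]^K$; the learner observes only $f_t(\theta_t,x_t)$. Regret w.r.t. $\Theta$: $\sup_{\theta\in\Theta}\mathbb{E}[\sum_t f_t(\theta_t,x_t)-f_t(\theta,x_t)]$. Induced environment: given the environment $\mathcal{E}$ producing the fixed sequence, an environment $\mathcal{E}'$ induced by importance weighting acts on each round $t$: picks an arbitrary $p_t\in[0,1]$ (possibly history dependent), reveals $x_t$, the learner picks $\theta_t$, and with probability $p_t$ the loss function becomes $f'_t=f_t/p_t$, otherwise $f'_t\equiv0$; the learner observes $f'_t(\theta_t,x_t)$. Weak stability: for $\alpha\in(0,1]$ and non-decreasing $\mathcal{R}$, an algorithm that receives a number $\rho_T$ ahead of time is $(\alpha,\mathcal{R})$-weakly-stable with respect to $\mathcal{E}$ if its regret under $\mathcal{E}$ is $\mathcal{R}(T)$ and under every induced $\mathcal{E}'$ with $\rho_T\ge\max_t1/p_t$, $\sup_{\theta\in\Theta}\mathbb{E}[\sum_t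 f'_t(\theta_t,x_t)-f'_t(\theta,x_t)]\le\rho_T^\alpha\mathcal{R}(T)$. EXP4 with learning rate $\eta'>0$: weights $w_1$ uniform on $\Theta$; on round $t$ sample $\theta_t\sim w_t$, let $q_t(a)=\sum_{\theta:\theta(x_t)=a}w_t(\theta)$, observe loss $\ell_t$, set $\hat c_t(a)=\ell_t\mathbf{1}\{\theta_t(x_t)=a\}/q_t(a)$ for $a\in[K]$, and update $w_{t+1}(\theta)\propto w_t(\theta)\exp(-\eta'\hat c_t(\theta(x_t)))$. *)

theory Defs
  imports "HOL-Probability.Probability"
begin

text \<open>Contextual bandits with actions 0,...,K-1 (i.e. [K]), policies 'x => nat,
  rounds indexed 0,...,T-1. A round record of the induced environment is
  (theta_t, p_t, b_t): the learner's chosen policy, the environment's probability p_t,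
  and the coin b_t (True with probability p_t, in which case f'_t = f_t / p_t,
  otherwise f'_t = 0).\<close>

type_synonym 'x round_rec = "('x \<Rightarrow> nat) \<times> real \<times> bool"

definition ind_loss :: "(nat \<Rightarrow> nat \<Rightarrow> real) \<Rightarrow> (nat \<Rightarrow> 'x) \<Rightarrow> nat \<Rightarrow> real \<times> bool \<Rightarrow> ('x \<Rightarrow> nat) \<Rightarrow> real" where
  "ind_loss c x t pb \<theta> = (if snd pb then c t (\<theta> (x t)) / fst pb else 0)"

definition exp4_update :: "real \<Rightarrow> ('x \<Rightarrow> nat) set \<Rightarrow> 'x \<Rightarrow> ('x \<Rightarrow> nat) \<Rightarrow> real
    \<Rightarrow> (('x \<Rightarrow> nat) \<Rightarrow> real) \<Rightarrow> (('x \<Rightarrow> nat) \<Rightarrow> real)" where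
  "exp4_update \<eta> \<Theta> xt tht l w =
     (let q = (\<lambda>a. \<Sum>\<theta>\<in>{\<theta>\<in>\<Theta>. \<theta> xt = a}. w \<theta>);
          chat = (\<lambda>a. l * (if tht xt = a then 1 else 0) / q a);
          u = (\<lambda>\<theta>. if \<theta> \<in> \<Theta> then w \<theta> * exp (- \<eta> * chat (\<theta> xt)) else 0)
      in (\<lambda>\<theta>. u \<theta> / (\<Sum>\<theta>'\<in>\<Theta>. u \<theta>')))"

primrec exp4_weights :: "real \<Rightarrow> ('x \<Rightarrow> nat) set \<Rightarrow> (nat \<Rightarrow> 'x) \<Rightarrow> (nat \<Rightarrow> ('x \<Rightarrow> nat) \<times> real)
    \<Rightarrow> nat \<Rightarrow> (('x \<Rightarrow> nat) \<Rightarrow> real)" where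
  "exp4_weights \<eta> \<Theta> x obs 0 = (\<lambda>\<theta>. if \<theta> \<in> \<Theta> then 1 / real (card \<Theta>) else 0)"
| "exp4_weights \<eta> \<Theta> x obs (Suc t) =
     exp4_update \<eta> \<Theta> (x t) (fst (obs t)) (snd (obs t)) (exp4_weights \<eta> \<Theta> x obs t)"

definition observations :: "(nat \<Rightarrow> nat \<Rightarrow> real) \<Rightarrow> (nat \<Rightarrow> 'x) \<Rightarrow> 'x round_rec list
    \<Rightarrow> nat \<Rightarrow> ('x \<Rightarrow> nat) \<times> real" where
  "observations c x h s = (fst (h ! s), ind_loss c x s (snd (h ! s)) (fst (h ! s)))"

primrec exp4_traj :: "real \<Rightarrow> ('x \<Rightarrow> nat) set \<Rightarrow> (nat \<Rightarrow> 'x) \<Rightarrow> (nat \<Rightarrow> nat \<Rightarrow> real)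
    \<Rightarrow> (nat \<Rightarrow> 'x round_rec list \<Rightarrow> real) \<Rightarrow> nat \<Rightarrow> 'x round_rec list pmf" where
  "exp4_traj \<eta> \<Theta> x c P 0 = return_pmf []"
| "exp4_traj \<eta> \<Theta> x c P (Suc n) =
     bind_pmf (exp4_traj \<eta> \<Theta> x c P n) (\<lambda>h.
       bind_pmf (embed_pmf (exp4_weights \<eta> \<Theta> x (observations c x h) n)) (\<lambda>\<theta>.
         bind_pmf (bernoulli_pmf (P n h)) (\<lambda>b.
           return_pmf (h @ [(\<theta>, P n h, b)]))))"

definition exp4_regret :: "real \<Rightarrow> ('x \<Rightarrow> nat) set \<Rightarrow> (nat \<Rightarrow> 'x) \<Rightarrow> (nat \<Rightarrow> nat \<Rightarrow> real)
    \<Rightarrow> (nat \<Rightarrow> 'x round_rec list \<Rightarrow> real) \<Rightarrow> nat \<Rightarrow> ('x \<Rightarrow> nat) \<Rightarrow> real" where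
  "exp4_regret \<eta> \<Theta> x c P T \<theta> =
     measure_pmf.expectation (exp4_traj \<eta> \<Theta> x c P T)
       (\<lambda>h. \<Sum>t<T. ind_loss c x t (snd (h ! t)) (fst (h ! t)) - ind_loss c x t (snd (h ! t)) \<theta>)"

end

theory Submission
  imports Defs
begin

definition qw :: "('x\<Rightarrow>nat) set \<Rightarrow> (('x\<Rightarrow>nat)\<Rightarrow>real) \<Rightarrow> 'x \<Rightarrow> nat \<Rightarrow> real" where
  "qw \<Theta> w xt a = (\<Sum>\<theta>\<in>{\<theta>\<in>\<Theta>. \<theta> xt = a}. w \<theta>)"

definition Lhat :: "('x\<Rightarrow>nat) set \<Rightarrow> (('x\<Rightarrow>nat)\<Rightarrow>real) \<Rightarrow> 'x \<Rightarrow> ('x\<Rightarrow>nat) \<Rightarrow> real \<Rightarrow> ('x\<Rightarrow>nat) \<Rightarrow> real" where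
  "Lhat \<Theta> w xt tht l \<theta> = l * (if tht xt = \<theta> xt then 1 else 0) / qw \<Theta> w xt (\<theta> xt)"

lemma update_eq:
  "exp4_update \<eta> \<Theta> xt tht l w \<theta> =
    (if \<theta> \<in> \<Theta> then w \<theta> * exp (- \<eta> * Lhat \<Theta> w xt tht l \<theta>) else 0) /
    (\<Sum>\<theta>'\<in>\<Theta>. w \<theta>' * exp (- \<eta> * Lhat \<Theta> w xt tht l \<theta>'))"
  unfolding exp4_update_def Let_def Lhat_def qw_def
  by (auto intro!: sum.cong)

lemma W_props:
  assumes "finite \<Theta>" "\<Theta> \<noteq> {}"
  shows "(\<forall>\<theta>\<in>\<Theta>. exp4_weights \<eta> \<Theta> x obs t \<theta> > 0) \<and> (\<forall>\<theta>. \<theta>\<notin>\<Theta> \<longrightarrow> exp4_weights \<eta> \<Theta> x obs t \<theta> = 0)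
     \<and> sum (exp4_weights \<eta> \<Theta> x obs t) \<Theta> = 1"
proof (induction t)
  case 0
  then show ?case using assms by (simp add: card_gt_0_iff)
next
  case (Suc t)
  define w where "w = exp4_weights \<eta> \<Theta> x obs t"
  define L where "L = Lhat \<Theta> w (x t) (fst (obs t)) (snd (obs t))"
  define S where "S = (\<Sum>\<theta>'\<in>\<Theta>. w \<theta>' * exp (- \<eta> * L \<theta>'))"
  have wp: "\<forall>\<theta>\<in>\<Theta>. w \<theta> > 0" using Suc w_def by auto
  have Sp: "S > 0" unfolding S_def using wp assms by (intro sum_pos) auto
  have eq: "exp4_weights \<eta> \<Theta> x obs (Suc t) = (\<lambda>\<theta>. (if \<theta> \<in> \<Theta> then w \<theta> * exp (- \<eta> * L \<theta>) else 0) / S)"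
    by (auto simp: update_eq w_def L_def S_def)
  have "sum (exp4_weights \<eta> \<Theta> x obs (Suc t)) \<Theta> = (\<Sum>\<theta>\<in>\<Theta>. w \<theta> * exp (- \<eta> * L \<theta>)) / S"
    unfolding eq sum_divide_distrib by (auto intro!: sum.cong)
  also have "\<dots> = 1" using Sp S_def by simp
  finally show ?case using wp Sp unfolding eq by auto
qed

lemma exp_neg_bound:
  fixes z :: real assumes "0 \<le> z" shows "exp (- z) \<le> 1 - z + z^2/2"
proof -
  have a: "1 + z + z^2/2 \<le> exp z" using exp_lower_Taylor_quadratic[OF assms] by simp
  have b: "(1 + z + z^2/2) * (1 - z + z^2/2) = 1 + z^4/4" by (simp add: algebra_simps power2_eq_square power4_eq_xxxx)
  have p: "0 < 1 + z + z^2/2" using assms by (simp add: add_pos_nonneg)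
  have "exp (-z) = 1 / exp z" by (simp add: exp_minus field_simps)
  also have "\<dots> \<le> 1 / (1 + z + z^2/2)" using a p by (intro divide_left_mono) auto
  also have "\<dots> \<le> 1 - z + z^2/2" using b p by (simp add: divide_le_eq mult.commute[of "1 - z + z^2/2"])
  finally show ?thesis .
qed

lemma potential:
  fixes w L :: "nat \<Rightarrow> 'a \<Rightarrow> real"
  assumes fin: "finite \<Theta>" and ts: "\<theta>s \<in> \<Theta>" and eta: "\<eta> > 0"
    and w0: "\<forall>\<theta>\<in>\<Theta>. w 0 \<theta> = 1 / real (card \<Theta>)"
    and wS: "\<forall>t. \<forall>\<theta>\<in>\<Theta>. w (Suc t) \<theta> = w t \<theta> * exp (- \<eta> * L t \<theta>) / (\<Sum>\<theta>'\<in>\<Theta>. w t \<theta>' * exp (- \<eta> * L t \<theta>'))"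
    and Lnn: "\<forall>t<T. \<forall>\<theta>\<in>\<Theta>. 0 \<le> L t \<theta>"
  shows "(\<Sum>t<T. (\<Sum>\<theta>\<in>\<Theta>. w t \<theta> * L t \<theta>)) - (\<Sum>t<T. L t \<theta>s)
     \<le> ln (real (card \<Theta>)) / \<eta> + \<eta> / 2 * (\<Sum>t<T. \<Sum>\<theta>\<in>\<Theta>. w t \<theta> * (L t \<theta>)^2)"
proof -
  have ne: "\<Theta> \<noteq> {}" using ts by auto
  have cp: "card \<Theta> > 0" using fin ne by (simp add: card_gt_0_iff)
  have pos: "(\<forall>\<theta>\<in>\<Theta>. w t \<theta> > 0) \<and> sum (w t) \<Theta> = 1" for t
  proof (induction t)
    case 0 then show ?case using w0 cp by simp
  next
    case (Suc t)
    define S where "S = (\<Sum>\<theta>'\<in>\<Theta>. w t \<theta>' * exp (- \<eta> * L t \<theta>'))"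
    have Sp: "S > 0" unfolding S_def using Suc ne fin by (intro sum_pos) auto
    have "sum (w (Suc t)) \<Theta> = (\<Sum>\<theta>\<in>\<Theta>. w t \<theta> * exp (- \<eta> * L t \<theta>) / S)"
      using wS S_def by (intro sum.cong) auto
    also have "\<dots> = 1" unfolding sum_divide_distrib[symmetric] using Sp S_def by simp
    finally show ?case using wS Suc Sp S_def by auto
  qed
  define V where "V t = (\<Sum>\<theta>\<in>\<Theta>. w t \<theta> * (L t \<theta>)^2)" for t
  define M where "M t = (\<Sum>\<theta>\<in>\<Theta>. w t \<theta> * L t \<theta>)" for t
  have claim: "n \<le> T \<Longrightarrow> ln (w n \<theta>s) \<ge> - ln (real (card \<Theta>)) - \<eta> * (\<Sum>t<n. L t \<theta>s) + \<eta> * (\<Sum>t<n. M t)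
      - \<eta>^2/2 * (\<Sum>t<n. V t)" for n
  proof (induction n)
    case 0 then show ?case using w0 ts cp by (simp add: ln_div)
  next
    case (Suc n)
    define Z where "Z = (\<Sum>\<theta>'\<in>\<Theta>. w n \<theta>' * exp (- \<eta> * L n \<theta>'))"
    have Zp: "Z > 0" unfolding Z_def using pos ne fin by (intro sum_pos) auto
    have wn: "w n \<theta>s > 0" using pos ts by auto
    have "ln (w (Suc n) \<theta>s) = ln (w n \<theta>s) + (- \<eta> * L n \<theta>s) - ln Z"
      using wS ts Zp wn by (simp add: Z_def ln_div ln_mult)
    moreover have "ln Z \<le> Z - 1" using Zp by (rule ln_le_minus_one)
    moreover have "Z \<le> (\<Sum>\<theta>\<in>\<Theta>. w n \<theta> * (1 - \<eta> * L n \<theta> + (\<eta> * L n \<theta>)^2/2))"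
      unfolding Z_def
    proof (intro sum_mono mult_left_mono)
      fix \<theta> assume "\<theta> \<in> \<Theta>"
      then have "0 \<le> \<eta> * L n \<theta>" using Lnn Suc.prems eta by auto
      then show "exp (- \<eta> * L n \<theta>) \<le> 1 - \<eta> * L n \<theta> + (\<eta> * L n \<theta>)^2/2"
        using exp_neg_bound by auto
      show "0 \<le> w n \<theta>" using pos \<open>\<theta> \<in> \<Theta>\<close> by (auto intro: less_imp_le)
    qed
    moreover have "(\<Sum>\<theta>\<in>\<Theta>. w n \<theta> * (1 - \<eta> * L n \<theta> + (\<eta> * L n \<theta>)^2/2))
        = sum (w n) \<Theta> - \<eta> * M n + \<eta>^2/2 * V n"
      unfolding M_def V_def by (simp add: algebra_simps sum.distrib sum_subtractf sum_distrib_left power_mult_distrib)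
    ultimately show ?case using Suc pos[of n] by (simp add: ring_distribs diff_divide_distrib add_divide_distrib)
  qed
  have "w T \<theta>s \<le> sum (w T) \<Theta>" using pos[of T] fin ts by (intro member_le_sum) (auto intro: less_imp_le)
  then have "w T \<theta>s \<le> 1" using pos[of T] by simp
  then have "ln (w T \<theta>s) \<le> 0" using pos ts by auto
  with claim[of T] have "\<eta> * ((\<Sum>t<T. M t) - (\<Sum>t<T. L t \<theta>s)) \<le> ln (real (card \<Theta>)) + \<eta>^2/2 * (\<Sum>t<T. V t)"
    by (simp add: algebra_simps)
  then have "(\<Sum>t<T. M t) - (\<Sum>t<T. L t \<theta>s) \<le> (ln (real (card \<Theta>)) + \<eta>^2/2 * (\<Sum>t<T. V t)) / \<eta>"
    using eta by (simp add: le_divide_eq mult.commute)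
  also have "\<dots> = ln (real (card \<Theta>)) / \<eta> + \<eta> / 2 * (\<Sum>t<T. V t)"
    using eta by (simp add: field_simps power2_eq_square)
  finally show ?thesis unfolding M_def V_def .
qed

lemma E_cong: "(\<And>x. x \<in> set_pmf M \<Longrightarrow> f x = g x) \<Longrightarrow> measure_pmf.expectation M f = measure_pmf.expectation M (g::_\<Rightarrow>real)"
  by (intro integral_cong_AE) (auto intro: AE_pmfI)

lemma E_mono: "finite (set_pmf M) \<Longrightarrow> (\<And>x. x \<in> set_pmf M \<Longrightarrow> f x \<le> g x) \<Longrightarrow> measure_pmf.expectation M f \<le> measure_pmf.expectation M (g::_\<Rightarrow>real)"
  by (intro integral_mono_AE integrable_measure_pmf_finite) (auto intro: AE_pmfI)

lemma E_add: "finite (set_pmf M) \<Longrightarrow> measure_pmf.expectation M (\<lambda>x. f x + g x) = measure_pmf.expectation M f + measure_pmf.expectation M (g::_\<Rightarrow>real)"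
  by (intro Bochner_Integration.integral_add integrable_measure_pmf_finite)

lemma E_sum: "finite (set_pmf M) \<Longrightarrow> measure_pmf.expectation M (\<lambda>x. \<Sum>i\<in>I. f i x) = (\<Sum>i\<in>I. measure_pmf.expectation M (f i) :: real)"
  by (intro Bochner_Integration.integral_sum integrable_measure_pmf_finite)

lemma E_const: "measure_pmf.expectation M (\<lambda>x. c) = (c::real)"
  by simp

lemma E_bind:
  assumes "finite (set_pmf p)" "\<And>x. x \<in> set_pmf p \<Longrightarrow> finite (set_pmf (f x))"
  shows "measure_pmf.expectation (p \<bind> f) h = measure_pmf.expectation p (\<lambda>a. measure_pmf.expectation (f a) (h::_\<Rightarrow>real))"
  using assms by (subst pmf_expectation_bind[of "set_pmf p"]) (auto simp: integral_measure_pmf[of "set_pmf p"])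

lemma embed_W:
  assumes "finite \<Theta>" "\<Theta> \<noteq> {}"
  and w_def: "w = exp4_weights \<eta> \<Theta> x obs t"
  shows "pmf (embed_pmf w) = w" "set_pmf (embed_pmf w) = \<Theta>"
    "measure_pmf.expectation (embed_pmf w) f = (\<Sum>\<theta>\<in>\<Theta>. w \<theta> * (f \<theta>::real))"
proof -
  have P: "(\<forall>\<theta>\<in>\<Theta>. w \<theta> > 0) \<and> (\<forall>\<theta>. \<theta>\<notin>\<Theta> \<longrightarrow> w \<theta> = 0) \<and> sum w \<Theta> = 1"
    using W_props[OF assms(1,2)] w_def by blast
  have nn: "\<And>\<theta>. 0 \<le> w \<theta>" using P by (metis less_imp_le order_refl)
  have "(\<integral>\<^sup>+\<theta>. ennreal (w \<theta>) \<partial>count_space UNIV) = (\<Sum>\<theta>\<in>\<Theta>. ennreal (w \<theta>))"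
    using P assms by (intro nn_integral_count_space') auto
  also have "\<dots> = 1" using nn P by simp
  finally have I: "(\<integral>\<^sup>+\<theta>. ennreal (w \<theta>) \<partial>count_space UNIV) = 1" .
  show pm: "pmf (embed_pmf w) = w" using pmf_embed_pmf[OF nn I] by auto
  show st: "set_pmf (embed_pmf w) = \<Theta>" using set_embed_pmf[OF nn I] P by auto
  show "measure_pmf.expectation (embed_pmf w) f = (\<Sum>\<theta>\<in>\<Theta>. w \<theta> * (f \<theta>::real))"
    using assms st pm by (subst integral_measure_pmf[of \<Theta>]) auto
qed

lemma weights_local: "(\<forall>s<t. obs s = obs' s) \<Longrightarrow> exp4_weights \<eta> \<Theta> x obs t = exp4_weights \<eta> \<Theta> x obs' t"
  by (induction t) auto

lemma weights_take: "exp4_weights \<eta> \<Theta> x (observations c x (take t h)) t = exp4_weights \<eta> \<Theta> x (observations c x h) t"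
  by (intro weights_local) (auto simp: observations_def)

lemma traj_support:
  assumes "finite \<Theta>" "\<Theta> \<noteq> {}"
  shows "finite (set_pmf (exp4_traj \<eta> \<Theta> x c P n)) \<and>
    (\<forall>h\<in>set_pmf (exp4_traj \<eta> \<Theta> x c P n). length h = n \<and> (\<forall>t<n. fst (h!t) \<in> \<Theta> \<and> fst (snd (h!t)) = P t (take t h)))"
proof (induction n)
  case 0 then show ?case by simp
next
  case (Suc n)
  have fin: "finite (set_pmf (bernoulli_pmf p))" for p
    by (rule finite_subset[of _ UNIV]) auto
  note E = embed_W[OF assms refl]
  show ?case
  proof
    show "finite (set_pmf (exp4_traj \<eta> \<Theta> x c P (Suc n)))"
      using Suc E fin assms by (auto intro!: finite_UN_I)
    show "\<forall>h\<in>set_pmf (exp4_traj \<eta> \<Theta> x c P (Suc n)). length h = Suc n \<and> (\<forall>t<Suc n. fst (h!t) \<in> \<Theta> \<and> fst (snd (h!t)) = P t (take t h))"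
    proof
      fix h assume "h \<in> set_pmf (exp4_traj \<eta> \<Theta> x c P (Suc n))"
      then obtain y \<theta> b where y: "y \<in> set_pmf (exp4_traj \<eta> \<Theta> x c P n)" and th: "\<theta> \<in> \<Theta>"
        and h: "h = y @ [(\<theta>, P n y, b)]" using E by auto
      have ly: "length y = n" using Suc y by auto
      show "length h = Suc n \<and> (\<forall>t<Suc n. fst (h!t) \<in> \<Theta> \<and> fst (snd (h!t)) = P t (take t h))"
      proof (rule conjI)
        show "length h = Suc n" using h ly by simp
        show "\<forall>t<Suc n. fst (h!t) \<in> \<Theta> \<and> fst (snd (h!t)) = P t (take t h)"
        proof (intro allI impI)
        fix t assume "t < Suc n"
        then consider "t < n" | "t = n" by linarith
        then show "fst (h!t) \<in> \<Theta> \<and> fst (snd (h!t)) = P t (take t h)"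
        proof cases
          case 1 then show ?thesis using Suc y ly h by (auto simp: nth_append)
        next
          case 2 then show ?thesis using ly h th by (auto simp: nth_append)
        qed
        qed
      qed
    qed
  qed
qed

lemma bern_fin: "finite (set_pmf (bernoulli_pmf p))"
  by (rule finite_subset[of _ UNIV]) auto

lemma traj_step:
  assumes "finite \<Theta>" "\<Theta> \<noteq> {}"
  shows "measure_pmf.expectation (exp4_traj \<eta> \<Theta> x c P (Suc n)) (g::_\<Rightarrow>real) =
    measure_pmf.expectation (exp4_traj \<eta> \<Theta> x c P n) (\<lambda>h.
      measure_pmf.expectation (embed_pmf (exp4_weights \<eta> \<Theta> x (observations c x h) n)) (\<lambda>\<theta>.
        measure_pmf.expectation (bernoulli_pmf (P n h)) (\<lambda>b. g (h @ [(\<theta>, P n h, b)]))))"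
proof -
  note S = traj_support[OF assms, of \<eta> x c P n]
  note E = embed_W[OF assms refl]
  show ?thesis
    apply (simp only: exp4_traj.simps)
    apply (subst E_bind)
      apply (use S in blast)
     apply (use assms E bern_fin in \<open>auto intro!: finite_UN_I\<close>)[1]
    apply (rule E_cong)
    apply (subst E_bind)
      apply (use assms E in simp)
     apply (use bern_fin in simp)
    apply (rule E_cong)
    apply (subst E_bind)
      apply (use bern_fin in simp)
     apply simp
    apply simp
    done
qed

definition Gstep where
  "Gstep \<eta> \<Theta> x c P F t h = measure_pmf.expectation (embed_pmf (exp4_weights \<eta> \<Theta> x (observations c x h) t)) (\<lambda>\<theta>.
        measure_pmf.expectation (bernoulli_pmf (P t h)) (\<lambda>b. F t h (\<theta>, P t h, b) :: real))"

lemma decomp: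
  assumes "finite \<Theta>" "\<Theta> \<noteq> {}"
  shows "measure_pmf.expectation (exp4_traj \<eta> \<Theta> x c P T) (\<lambda>h. \<Sum>t<T. F t (take t h) (h!t)) =
    (\<Sum>t<T. measure_pmf.expectation (exp4_traj \<eta> \<Theta> x c P t) (Gstep \<eta> \<Theta> x c P F t))"
proof (induction T)
  case 0 then show ?case by simp
next
  case (Suc T)
  note S = traj_support[OF assms, of \<eta> x c P T]
  note E = embed_W[OF assms refl]
  have "measure_pmf.expectation (exp4_traj \<eta> \<Theta> x c P (Suc T)) (\<lambda>h. \<Sum>t<Suc T. F t (take t h) (h!t))
     = measure_pmf.expectation (exp4_traj \<eta> \<Theta> x c P T) (\<lambda>h. (\<Sum>t<T. F t (take t h) (h!t)) + Gstep \<eta> \<Theta> x c P F T h)"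
    unfolding traj_step[OF assms]
  proof (rule E_cong)
    fix h assume h: "h \<in> set_pmf (exp4_traj \<eta> \<Theta> x c P T)"
    then have lh: "length h = T" using S by auto
    have eq: "(\<Sum>t<Suc T. F t (take t (h @ [r])) ((h @ [r])!t)) = (\<Sum>t<T. F t (take t h) (h!t)) + F T h r" for r
      using lh by (simp add: nth_append)
    have w1: "sum (exp4_weights \<eta> \<Theta> x (observations c x h) T) \<Theta> = 1" using W_props[OF assms] by blast
    show "measure_pmf.expectation (embed_pmf (exp4_weights \<eta> \<Theta> x (observations c x h) T))
          (\<lambda>\<theta>. measure_pmf.expectation (bernoulli_pmf (P T h))
                 (\<lambda>b. \<Sum>t<Suc T. F t (take t (h @ [(\<theta>, P T h, b)])) ((h @ [(\<theta>, P T h, b)]) ! t))) =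
         (\<Sum>t<T. F t (take t h) (h ! t)) + Gstep \<eta> \<Theta> x c P F T h"
      unfolding eq Gstep_def
      by (simp add: E_add bern_fin E assms distrib_left sum.distrib sum_distrib_right[symmetric] w1)
  qed
  also have "\<dots> = measure_pmf.expectation (exp4_traj \<eta> \<Theta> x c P T) (\<lambda>h. \<Sum>t<T. F t (take t h) (h!t))
      + measure_pmf.expectation (exp4_traj \<eta> \<Theta> x c P T) (Gstep \<eta> \<Theta> x c P F T)"
    using S by (intro E_add) auto
  finally show ?case using Suc by simp
qed

definition Fst :: "real \<Rightarrow> ('x\<Rightarrow>nat) \<Rightarrow> real \<Rightarrow> ('x\<Rightarrow>nat) set \<Rightarrow> (nat\<Rightarrow>'x) \<Rightarrow> (nat\<Rightarrow>nat\<Rightarrow>real) \<Rightarrow> nat \<Rightarrow> 'x round_rec list \<Rightarrow> 'x round_rec \<Rightarrow> real" where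
  "Fst \<alpha> \<theta>s \<eta> \<Theta> x c t h r = (let w = exp4_weights \<eta> \<Theta> x (observations c x h) t;
      l = ind_loss c x t (snd r) (fst r); L = Lhat \<Theta> w (x t) (fst r) l in
    l - (\<Sum>\<theta>\<in>\<Theta>. w \<theta> * L \<theta>) + \<alpha> * (\<Sum>\<theta>\<in>\<Theta>. w \<theta> * (L \<theta>)^2) + L \<theta>s - ind_loss c x t (snd r) \<theta>s)"

lemma fiber:
  assumes "finite \<Theta>"
  shows "(\<Sum>\<theta>\<in>\<Theta>. if a = \<theta> xt then w \<theta> * g (\<theta> xt) else 0) = qw \<Theta> w xt a * (g a :: real)"
proof -
  have "(\<Sum>\<theta>\<in>\<Theta>. if a = \<theta> xt then w \<theta> * g (\<theta> xt) else 0) = (\<Sum>\<theta>\<in>{\<theta>\<in>\<Theta>. a = \<theta> xt}. w \<theta> * g (\<theta> xt))"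
    by (rule sum.inter_filter[OF assms, symmetric])
  also have "\<dots> = (\<Sum>\<theta>\<in>{\<theta>\<in>\<Theta>. \<theta> xt = a}. w \<theta> * g a)"
    by (rule sum.cong) auto
  also have "\<dots> = qw \<Theta> w xt a * g a" by (simp add: qw_def sum_distrib_right)
  finally show ?thesis .
qed

lemma qw_pos:
  assumes "finite \<Theta>" "\<forall>\<theta>\<in>\<Theta>. w \<theta> > 0" "\<theta> \<in> \<Theta>"
  shows "qw \<Theta> w xt (\<theta> xt) > 0"
  unfolding qw_def using assms by (intro sum_pos) auto

lemma inv_sum_card:
  assumes "finite \<Theta>" "\<forall>\<theta>\<in>\<Theta>. w \<theta> > 0"
  shows "(\<Sum>\<theta>\<in>\<Theta>. w \<theta> / qw \<Theta> w xt (\<theta> xt)) = real (card ((\<lambda>\<theta>. \<theta> xt) ` \<Theta>))"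
proof -
  have "(\<Sum>\<theta>\<in>\<Theta>. w \<theta> / qw \<Theta> w xt (\<theta> xt)) = (\<Sum>a\<in>(\<lambda>\<theta>. \<theta> xt) ` \<Theta>. \<Sum>\<theta>\<in>{\<theta>\<in>\<Theta>. \<theta> xt = a}. w \<theta> / qw \<Theta> w xt (\<theta> xt))"
    using assms(1) by (rule sum.image_gen)
  also have "\<dots> = (\<Sum>a\<in>(\<lambda>\<theta>. \<theta> xt) ` \<Theta>. 1)"
  proof (rule sum.cong[OF refl])
    fix a assume "a \<in> (\<lambda>\<theta>. \<theta> xt) ` \<Theta>"
    then obtain \<theta> where th: "\<theta> \<in> \<Theta>" and a: "a = \<theta> xt" by blast
    have qp: "qw \<Theta> w xt a > 0" unfolding a by (rule qw_pos[OF assms th])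
    have "(\<Sum>\<theta>\<in>{\<theta>\<in>\<Theta>. \<theta> xt = a}. w \<theta> / qw \<Theta> w xt (\<theta> xt)) = (\<Sum>\<theta>\<in>{\<theta>\<in>\<Theta>. \<theta> xt = a}. w \<theta> / qw \<Theta> w xt a)"
      by (rule sum.cong) auto
    also have "\<dots> = qw \<Theta> w xt a / qw \<Theta> w xt a"
      unfolding sum_divide_distrib[symmetric] qw_def ..
    also have "\<dots> = 1" using qp by simp
    finally show "(\<Sum>\<theta>\<in>{\<theta>\<in>\<Theta>. \<theta> xt = a}. w \<theta> / qw \<Theta> w xt (\<theta> xt)) = 1" .
  qed
  finally show ?thesis by simp
qed

lemma step_bound:
  assumes fin: "finite \<Theta>" and ts: "\<theta>s \<in> \<Theta>" and K: "\<forall>\<theta>\<in>\<Theta>. \<forall>z. \<theta> z < K"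
    and cb: "\<forall>t a. a < K \<longrightarrow> 0 \<le> c t a \<and> c t a \<le> 1"
    and p: "0 < P t h" "P t h \<le> 1" "1 / P t h \<le> \<rho>" and al: "\<alpha> \<ge> 0"
  shows "Gstep \<eta> \<Theta> x c P (Fst \<alpha> \<theta>s \<eta> \<Theta> x c) t h \<le> \<alpha> * \<rho> * real K"
proof -
  have ne: "\<Theta> \<noteq> {}" using ts by auto
  define w where "w = exp4_weights \<eta> \<Theta> x (observations c x h) t"
  define xt where "xt = x t"
  define q where "q = qw \<Theta> w xt"
  define pp where "pp = P t h"
  define as where "as = \<theta>s xt"
  have WP0: "(\<forall>\<theta>\<in>\<Theta>. w \<theta> > 0) \<and> (\<forall>\<theta>. \<theta>\<notin>\<Theta> \<longrightarrow> w \<theta> = 0) \<and> sum w \<Theta> = 1"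
    unfolding w_def by (rule W_props[OF fin ne])
  have WP: "(\<forall>\<theta>\<in>\<Theta>. w \<theta> > 0) \<and> sum w \<Theta> = 1" using WP0 by simp
  have qp: "\<And>\<theta>. \<theta> \<in> \<Theta> \<Longrightarrow> q (\<theta> xt) > 0" unfolding q_def using WP by (intro qw_pos[OF fin]) auto
  have cc: "0 \<le> c t (\<theta> xt) \<and> c t (\<theta> xt) \<le> 1" if "\<theta> \<in> \<Theta>" for \<theta>
  proof -
    have "\<theta> xt < K" using K that by blast
    then show ?thesis using cb by blast
  qed
  have per: "measure_pmf.expectation (bernoulli_pmf pp) (\<lambda>b. Fst \<alpha> \<theta>s \<eta> \<Theta> x c t h (\<theta>', pp, b))
      = \<alpha> * (c t (\<theta>' xt))^2 / (pp * q (\<theta>' xt)) + (if as = \<theta>' xt then c t (\<theta>' xt) / q as else 0) - c t as"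
    if th: "\<theta>' \<in> \<Theta>" for \<theta>'
  proof -
    define l where "l = c t (\<theta>' xt) / pp"
    define L where "L = Lhat \<Theta> w xt \<theta>' l"
    have F0: "Fst \<alpha> \<theta>s \<eta> \<Theta> x c t h (\<theta>', pp, False) = 0"
      by (simp add: Fst_def Let_def ind_loss_def Lhat_def)
    have Leq: "\<And>\<theta>. w \<theta> * L \<theta> = (if \<theta>' xt = \<theta> xt then w \<theta> * (l / q (\<theta> xt)) else 0)"
      by (simp add: L_def Lhat_def q_def)
    have L2eq: "\<And>\<theta>. w \<theta> * (L \<theta>)^2 = (if \<theta>' xt = \<theta> xt then w \<theta> * ((l / q (\<theta> xt))^2) else 0)"
      by (simp add: L_def Lhat_def q_def)
    have M: "(\<Sum>\<theta>\<in>\<Theta>. w \<theta> * L \<theta>) = l"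
      unfolding Leq using fiber[OF fin, of "\<theta>' xt" xt w "\<lambda>a. l / q a"] qp[OF th]
      by (simp add: q_def)
    have V: "(\<Sum>\<theta>\<in>\<Theta>. w \<theta> * (L \<theta>)^2) = l^2 / q (\<theta>' xt)"
      unfolding L2eq using fiber[OF fin, of "\<theta>' xt" xt w "\<lambda>a. (l / q a)^2"] qp[OF th]
      by (simp add: q_def power2_eq_square)
    have Ls: "L \<theta>s = (if as = \<theta>' xt then l / q as else 0)"
      by (auto simp: L_def Lhat_def q_def as_def)
    have F1': "Fst \<alpha> \<theta>s \<eta> \<Theta> x c t h (\<theta>', pp, True) = l - (\<Sum>\<theta>\<in>\<Theta>. w \<theta> * L \<theta>) + \<alpha> * (\<Sum>\<theta>\<in>\<Theta>. w \<theta> * (L \<theta>)^2) + L \<theta>s - c t as / pp"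
      unfolding Fst_def Let_def w_def[symmetric] by (simp add: ind_loss_def l_def L_def as_def xt_def)
    have F1: "Fst \<alpha> \<theta>s \<eta> \<Theta> x c t h (\<theta>', pp, True) = \<alpha> * (l^2 / q (\<theta>' xt)) + (if as = \<theta>' xt then l / q as else 0) - c t as / pp"
      unfolding F1' M V Ls by simp
    have pp0: "0 < pp" "pp \<le> 1" using p pp_def by auto
    have "measure_pmf.expectation (bernoulli_pmf pp) (\<lambda>b. Fst \<alpha> \<theta>s \<eta> \<Theta> x c t h (\<theta>', pp, b))
       = Fst \<alpha> \<theta>s \<eta> \<Theta> x c t h (\<theta>', pp, True) * pp" using pp0 F0 by simp
    also have "\<dots> = \<alpha> * (c t (\<theta>' xt))^2 / (pp * q (\<theta>' xt)) + (if as = \<theta>' xt then c t (\<theta>' xt) / q as else 0) - c t as"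
      unfolding F1 using pp0
      by (cases "as = \<theta>' xt") (simp_all add: l_def algebra_simps power2_eq_square)
    finally show ?thesis .
  qed
  have "Gstep \<eta> \<Theta> x c P (Fst \<alpha> \<theta>s \<eta> \<Theta> x c) t h = (\<Sum>\<theta>'\<in>\<Theta>. w \<theta>' *
      measure_pmf.expectation (bernoulli_pmf pp) (\<lambda>b. Fst \<alpha> \<theta>s \<eta> \<Theta> x c t h (\<theta>', pp, b)))"
    unfolding Gstep_def embed_W(3)[OF fin ne refl] w_def pp_def ..
  also have "\<dots> = (\<Sum>\<theta>'\<in>\<Theta>. \<alpha> / pp * (w \<theta>' * (c t (\<theta>' xt))^2 / q (\<theta>' xt))
        + (if as = \<theta>' xt then w \<theta>' * (c t (\<theta>' xt) / q as) else 0) - w \<theta>' * c t as)"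
  proof (intro sum.cong refl)
    fix \<theta>' assume th: "\<theta>' \<in> \<Theta>"
    have e1: "w \<theta>' * (\<alpha> * (c t (\<theta>' xt))^2 / (pp * q (\<theta>' xt))) = \<alpha> / pp * (w \<theta>' * (c t (\<theta>' xt))^2 / q (\<theta>' xt))"
      by simp
    show "w \<theta>' * measure_pmf.expectation (bernoulli_pmf pp) (\<lambda>b. Fst \<alpha> \<theta>s \<eta> \<Theta> x c t h (\<theta>', pp, b)) =
      \<alpha> / pp * (w \<theta>' * (c t (\<theta>' xt))^2 / q (\<theta>' xt)) + (if as = \<theta>' xt then w \<theta>' * (c t (\<theta>' xt) / q as) else 0) - w \<theta>' * c t as"
      unfolding per[OF th] distrib_left right_diff_distrib e1 by simp
  qed
  also have "\<dots> = \<alpha> / pp * (\<Sum>\<theta>'\<in>\<Theta>. w \<theta>' * (c t (\<theta>' xt))^2 / q (\<theta>' xt))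
        + (\<Sum>\<theta>'\<in>\<Theta>. (if as = \<theta>' xt then w \<theta>' * (c t (\<theta>' xt) / q as) else 0)) - sum w \<Theta> * c t as"
    by (simp add: sum.distrib sum_subtractf sum_distrib_left sum_distrib_right)
  also have "(\<Sum>\<theta>'\<in>\<Theta>. (if as = \<theta>' xt then w \<theta>' * (c t (\<theta>' xt) / q as) else 0)) = c t as"
    using fiber[OF fin, of as xt w "\<lambda>a. c t a / q as"] qp[OF ts] by (simp add: q_def as_def)
  finally have Geq: "Gstep \<eta> \<Theta> x c P (Fst \<alpha> \<theta>s \<eta> \<Theta> x c) t h = \<alpha> / pp * (\<Sum>\<theta>'\<in>\<Theta>. w \<theta>' * (c t (\<theta>' xt))^2 / q (\<theta>' xt))"
    using WP by simp
  have "(\<Sum>\<theta>'\<in>\<Theta>. w \<theta>' * (c t (\<theta>' xt))^2 / q (\<theta>' xt)) \<le> (\<Sum>\<theta>'\<in>\<Theta>. w \<theta>' / q (\<theta>' xt))"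
  proof (intro sum_mono divide_right_mono)
    fix \<theta>' assume th: "\<theta>' \<in> \<Theta>"
    have "(c t (\<theta>' xt))^2 \<le> 1" using cc[OF th] by (simp add: power_le_one)
    moreover have "0 \<le> w \<theta>'" using WP th by auto
    ultimately show "w \<theta>' * (c t (\<theta>' xt))^2 \<le> w \<theta>'"
      using mult_left_mono[of "(c t (\<theta>' xt))^2" 1 "w \<theta>'"] by simp
    show "0 \<le> q (\<theta>' xt)" using qp[OF th] by simp
  qed
  also have "(\<Sum>\<theta>'\<in>\<Theta>. w \<theta>' / q (\<theta>' xt)) = real (card ((\<lambda>\<theta>. \<theta> xt) ` \<Theta>))"
    unfolding q_def using WP by (intro inv_sum_card fin) auto
  also have "real (card ((\<lambda>\<theta>. \<theta> xt) ` \<Theta>)) \<le> real K"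
  proof -
    have "(\<lambda>\<theta>. \<theta> xt) ` \<Theta> \<subseteq> {..<K}" using K by auto
    then have "card ((\<lambda>\<theta>. \<theta> xt) ` \<Theta>) \<le> card {..<K}" by (intro card_mono) auto
    then show ?thesis by simp
  qed
  finally have S1: "(\<Sum>\<theta>'\<in>\<Theta>. w \<theta>' * (c t (\<theta>' xt))^2 / q (\<theta>' xt)) \<le> real K" .
  have pp0: "0 < pp" "1 / pp \<le> \<rho>" using p pp_def by auto
  have "\<alpha> / pp * (\<Sum>\<theta>'\<in>\<Theta>. w \<theta>' * (c t (\<theta>' xt))^2 / q (\<theta>' xt)) \<le> \<alpha> / pp * real K"
    using S1 al pp0 by (intro mult_left_mono) auto
  also have "\<dots> = \<alpha> * (1 / pp) * real K" by simp
  also have "\<dots> \<le> \<alpha> * \<rho> * real K" using pp0 al by (intro mult_right_mono mult_left_mono) auto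
  finally show ?thesis unfolding Geq .
qed

definition Wh where "Wh \<eta> \<Theta> x c h t = exp4_weights \<eta> \<Theta> x (observations c x h) t"
definition Lh where "Lh \<eta> \<Theta> x c h t = Lhat \<Theta> (Wh \<eta> \<Theta> x c h t) (x t) (fst (h!t)) (ind_loss c x t (snd (h!t)) (fst (h!t)))"

lemma main_bound:
  assumes fin: "finite \<Theta>" and ts: "\<theta>s \<in> \<Theta>" and K: "\<forall>\<theta>\<in>\<Theta>. \<forall>z. \<theta> z < K"
    and cb: "\<forall>t a. a < K \<longrightarrow> 0 \<le> c t a \<and> c t a \<le> 1"
    and P: "\<forall>t<T. \<forall>h. 0 < P t h \<and> P t h \<le> 1 \<and> 1 / P t h \<le> \<rho>" and al: "\<alpha> \<ge> 0"
    and path: "\<forall>h\<in>set_pmf (exp4_traj \<eta> \<Theta> x c P T).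
       (\<Sum>t<T. \<Sum>\<theta>\<in>\<Theta>. Wh \<eta> \<Theta> x c h t \<theta> * Lh \<eta> \<Theta> x c h t \<theta>) - (\<Sum>t<T. Lh \<eta> \<Theta> x c h t \<theta>s)
         \<le> D + \<alpha> * (\<Sum>t<T. \<Sum>\<theta>\<in>\<Theta>. Wh \<eta> \<Theta> x c h t \<theta> * (Lh \<eta> \<Theta> x c h t \<theta>)^2)"
  shows "exp4_regret \<eta> \<Theta> x c P T \<theta>s \<le> D + real T * (\<alpha> * \<rho> * real K)"
proof -
  have ne: "\<Theta> \<noteq> {}" using ts by auto
  note S = traj_support[OF fin ne, of \<eta> x c P T]
  define F where "F = Fst \<alpha> \<theta>s \<eta> \<Theta> x c"
  define R where "R t h = ind_loss c x t (snd (h ! t)) (fst (h ! t)) - ind_loss c x t (snd (h ! t)) \<theta>s" for t h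
  have Fe: "F t (take t h) (h!t) = R t h - (\<Sum>\<theta>\<in>\<Theta>. Wh \<eta> \<Theta> x c h t \<theta> * Lh \<eta> \<Theta> x c h t \<theta>)
      + \<alpha> * (\<Sum>\<theta>\<in>\<Theta>. Wh \<eta> \<Theta> x c h t \<theta> * (Lh \<eta> \<Theta> x c h t \<theta>)^2) + Lh \<eta> \<Theta> x c h t \<theta>s" for t h
    unfolding F_def Fst_def Let_def weights_take R_def Lh_def Wh_def by simp
  have pw: "(\<Sum>t<T. R t h) \<le> D + (\<Sum>t<T. F t (take t h) (h!t))" if h: "h \<in> set_pmf (exp4_traj \<eta> \<Theta> x c P T)" for h
  proof -
    have "(\<Sum>t<T. F t (take t h) (h!t)) = (\<Sum>t<T. R t h) - (\<Sum>t<T. \<Sum>\<theta>\<in>\<Theta>. Wh \<eta> \<Theta> x c h t \<theta> * Lh \<eta> \<Theta> x c h t \<theta>)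
      + \<alpha> * (\<Sum>t<T. \<Sum>\<theta>\<in>\<Theta>. Wh \<eta> \<Theta> x c h t \<theta> * (Lh \<eta> \<Theta> x c h t \<theta>)^2) + (\<Sum>t<T. Lh \<eta> \<Theta> x c h t \<theta>s)"
      unfolding Fe by (simp add: sum.distrib sum_subtractf sum_distrib_left)
    moreover have "(\<Sum>t<T. \<Sum>\<theta>\<in>\<Theta>. Wh \<eta> \<Theta> x c h t \<theta> * Lh \<eta> \<Theta> x c h t \<theta>) - (\<Sum>t<T. Lh \<eta> \<Theta> x c h t \<theta>s)
         \<le> D + \<alpha> * (\<Sum>t<T. \<Sum>\<theta>\<in>\<Theta>. Wh \<eta> \<Theta> x c h t \<theta> * (Lh \<eta> \<Theta> x c h t \<theta>)^2)" using path h by blast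
    ultimately show ?thesis by linarith
  qed
  have "exp4_regret \<eta> \<Theta> x c P T \<theta>s = measure_pmf.expectation (exp4_traj \<eta> \<Theta> x c P T) (\<lambda>h. \<Sum>t<T. R t h)"
    unfolding exp4_regret_def R_def ..
  also have "\<dots> \<le> measure_pmf.expectation (exp4_traj \<eta> \<Theta> x c P T) (\<lambda>h. D + (\<Sum>t<T. F t (take t h) (h!t)))"
    using S pw by (intro E_mono) auto
  also have "\<dots> = D + measure_pmf.expectation (exp4_traj \<eta> \<Theta> x c P T) (\<lambda>h. \<Sum>t<T. F t (take t h) (h!t))"
    using S by (subst E_add) auto
  also have "measure_pmf.expectation (exp4_traj \<eta> \<Theta> x c P T) (\<lambda>h. \<Sum>t<T. F t (take t h) (h!t))
      = (\<Sum>t<T. measure_pmf.expectation (exp4_traj \<eta> \<Theta> x c P t) (Gstep \<eta> \<Theta> x c P F t))"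
    by (rule decomp[OF fin ne])
  also have "\<dots> \<le> (\<Sum>t<T. \<alpha> * \<rho> * real K)"
  proof (rule sum_mono)
    fix t assume "t \<in> {..<T}"
    then have tT: "t < T" by simp
    have "measure_pmf.expectation (exp4_traj \<eta> \<Theta> x c P t) (Gstep \<eta> \<Theta> x c P F t)
        \<le> measure_pmf.expectation (exp4_traj \<eta> \<Theta> x c P t) (\<lambda>_. \<alpha> * \<rho> * real K)"
    proof (rule E_mono)
      show "finite (set_pmf (exp4_traj \<eta> \<Theta> x c P t))" using traj_support[OF fin ne] by blast
      fix h show "Gstep \<eta> \<Theta> x c P F t h \<le> \<alpha> * \<rho> * real K"
        unfolding F_def using P tT by (intro step_bound[OF fin ts K cb _ _ _ al]) auto
    qed
    then show "measure_pmf.expectation (exp4_traj \<eta> \<Theta> x c P t) (Gstep \<eta> \<Theta> x c P F t) \<le> \<alpha> * \<rho> * real K"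
      by simp
  qed
  finally show ?thesis by simp
qed

lemma final_arith:
  fixes A B \<rho> K T :: real
  assumes A: "A > 0" and B: "B = \<rho> * K * T" "B > 0" and r: "\<rho> > 0"
  defines "\<eta> \<equiv> sqrt (2 * A / B)"
  shows "A / \<eta> + T * (\<eta> / 2 * \<rho> * K) \<le> \<rho> powr (1/2) * (2 * sqrt (K * T * A))"
proof -
  have ep: "\<eta> > 0" unfolding \<eta>_def using A B by simp
  have e2: "\<eta>^2 = 2 * A / B" unfolding \<eta>_def using A B by simp
  have "A / \<eta> = A * \<eta> / \<eta>^2" using ep by (simp add: power2_eq_square)
  also have "\<dots> = \<eta> * B / 2" unfolding e2 using A B by (simp add: field_simps)
  finally have a1: "A / \<eta> = \<eta> * B / 2" .
  have a2: "T * (\<eta> / 2 * \<rho> * K) = \<eta> * B / 2" using B by (simp add: field_simps)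
  have "(\<eta> * B)^2 = 2 * A * B" unfolding power_mult_distrib e2 using B(2) by (simp add: power2_eq_square)
  then have "\<eta> * B = sqrt (2 * A * B)" using ep B by (metis less_imp_le real_sqrt_unique zero_le_mult_iff)
  also have "\<dots> \<le> sqrt (4 * A * B)" using A B(2) by simp
  also have "\<dots> = 2 * sqrt (A * B)" by (simp add: real_sqrt_mult)
  also have "sqrt (A * B) = sqrt \<rho> * sqrt (K * T * A)" unfolding B by (simp add: real_sqrt_mult[symmetric] algebra_simps)
  finally have "\<eta> * B \<le> 2 * (sqrt \<rho> * sqrt (K * T * A))" .
  then show ?thesis unfolding a1 a2 using r by (simp add: powr_half_sqrt algebra_simps)
qed

lemma Lh_nonneg:
  assumes fin: "finite \<Theta>" and ne: "\<Theta> \<noteq> {}" and K: "\<forall>\<theta>\<in>\<Theta>. \<forall>z. \<theta> z < K"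
    and cb: "\<forall>t a. a < K \<longrightarrow> 0 \<le> c t a \<and> c t a \<le> 1"
    and P: "\<forall>t<T. \<forall>h. 0 < P t h"
    and h: "h \<in> set_pmf (exp4_traj \<eta> \<Theta> x c P T)" and t: "t < T"
  shows "0 \<le> Lh \<eta> \<Theta> x c h t \<theta>"
proof -
  have S: "fst (h!t) \<in> \<Theta>" "fst (snd (h!t)) = P t (take t h)" using traj_support[OF fin ne] h t by blast+
  have pp: "fst (snd (h!t)) > 0" using S P t by simp
  have "fst (h!t) (x t) < K" using K S by blast
  then have cn: "0 \<le> c t (fst (h!t) (x t))" using cb by blast
  have l: "0 \<le> ind_loss c x t (snd (h!t)) (fst (h!t))"
    unfolding ind_loss_def using pp cn by auto
  have WP: "\<forall>\<theta>. 0 \<le> Wh \<eta> \<Theta> x c h t \<theta>" using W_props[OF fin ne] unfolding Wh_def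
    by (metis less_imp_le order_refl)
  have q: "0 \<le> qw \<Theta> (Wh \<eta> \<Theta> x c h t) (x t) a" for a unfolding qw_def using WP by (intro sum_nonneg) auto
  show ?thesis unfolding Lh_def Lhat_def using l q by auto
qed

theorem lemma6:
  shows "\<exists>(C::real) (eta :: nat \<Rightarrow> nat \<Rightarrow> nat \<Rightarrow> real \<Rightarrow> real).
    \<forall>(T::nat) (K::nat) (\<Theta>::('x \<Rightarrow> nat) set) (x::nat \<Rightarrow> 'x) (c::nat \<Rightarrow> nat \<Rightarrow> real).
      finite \<Theta> \<and> \<Theta> \<noteq> {} \<and> (\<forall>\<theta>\<in>\<Theta>. \<forall>z. \<theta> z < K) \<and>
      (\<forall>t a. a < K \<longrightarrow> 0 \<le> c t a \<and> c t a \<le> 1) \<longrightarrow>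
        (\<forall>\<theta>\<in>\<Theta>. exp4_regret (eta T K (card \<Theta>) 1) \<Theta> x c (\<lambda>_ _. 1) T \<theta>
             \<le> C * sqrt (real K * real T * ln (real (card \<Theta>))))
      \<and> (\<forall>(\<rho>::real) P. (\<forall>t<T. \<forall>h. 0 < P t h \<and> P t h \<le> 1 \<and> 1 / P t h \<le> \<rho>) \<longrightarrow>
          (\<forall>\<theta>\<in>\<Theta>. exp4_regret (eta T K (card \<Theta>) \<rho>) \<Theta> x c P T \<theta>
             \<le> \<rho> powr (1/2) * (C * sqrt (real K * real T * ln (real (card \<Theta>))))))"
proof (intro exI[of _ 2] exI[of _ "\<lambda>T K N \<rho>. sqrt (2 * ln (real N) / (\<rho> * real K * real T))"] allI impI)
  fix T K :: nat and \<Theta> :: "('x \<Rightarrow> nat) set" and x :: "nat \<Rightarrow> 'x" and c :: "nat \<Rightarrow> nat \<Rightarrow> real"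
  assume H: "finite \<Theta> \<and> \<Theta> \<noteq> {} \<and> (\<forall>\<theta>\<in>\<Theta>. \<forall>z. \<theta> z < K) \<and> (\<forall>t a. a < K \<longrightarrow> 0 \<le> c t a \<and> c t a \<le> 1)"
  then have fin: "finite \<Theta>" and ne: "\<Theta> \<noteq> {}" and K: "\<forall>\<theta>\<in>\<Theta>. \<forall>z. \<theta> z < K"
    and cb: "\<forall>t a. a < K \<longrightarrow> 0 \<le> c t a \<and> c t a \<le> 1" by auto
  define N where "N = card \<Theta>"
  have claim: "exp4_regret (sqrt (2 * ln (real N) / (\<rho> * real K * real T))) \<Theta> x c P T \<theta>s
      \<le> \<rho> powr (1/2) * (2 * sqrt (real K * real T * ln (real N)))"
    if Pa: "\<forall>t<T. \<forall>h. 0 < P t h \<and> P t h \<le> 1 \<and> 1 / P t h \<le> \<rho>" and ts: "\<theta>s \<in> \<Theta>" for \<rho> P \<theta>s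
  proof (cases "T = 0")
    case True then show ?thesis by (simp add: exp4_regret_def)
  next
    case False
    then have T0: "T > 0" by simp
    have "0 < P 0 [] \<and> P 0 [] \<le> 1 \<and> 1 / P 0 [] \<le> \<rho>" using Pa T0 by blast
    then have r1: "\<rho> \<ge> 1" by (smt (verit) le_divide_eq_1_pos)
    have K1: "K > 0" using K ts by (metis gr_zeroI not_less0)
    have N1: "N \<ge> 1" using fin ne N_def by (simp add: Suc_leI card_gt_0_iff)
    define \<eta> where "\<eta> = sqrt (2 * ln (real N) / (\<rho> * real K * real T))"
    have Pb: "\<forall>t<T. \<forall>h. 0 < P t h" using Pa by blast
    show ?thesis
    proof (cases "N = 1")
      case True
      then have "card \<Theta> = 1" using N_def by simp
      then obtain a where Ta: "\<Theta> = {a}" by (rule card_1_singletonE)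
      then have a: "a = \<theta>s" using ts by simp
      have "exp4_regret \<eta> \<Theta> x c P T \<theta>s \<le> 0 + real T * (0 * \<rho> * real K)"
      proof (rule main_bound[OF fin ts K cb Pa order_refl], intro ballI)
        fix h
        have "Wh \<eta> \<Theta> x c h t \<theta>s = 1" for t
          using W_props[OF fin ne, of \<eta> x "observations c x h" t] Ta a unfolding Wh_def by simp
        then show "(\<Sum>t<T. \<Sum>\<theta>\<in>\<Theta>. Wh \<eta> \<Theta> x c h t \<theta> * Lh \<eta> \<Theta> x c h t \<theta>) - (\<Sum>t<T. Lh \<eta> \<Theta> x c h t \<theta>s)
         \<le> 0 + 0 * (\<Sum>t<T. \<Sum>\<theta>\<in>\<Theta>. Wh \<eta> \<Theta> x c h t \<theta> * (Lh \<eta> \<Theta> x c h t \<theta>)^2)"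
          using Ta a by simp
      qed
      moreover have "0 \<le> \<rho> powr (1/2) * (2 * sqrt (real K * real T * ln (real N)))"
        using True by simp
      ultimately show ?thesis unfolding \<eta>_def by simp
    next
      case False
      then have N2: "N \<ge> 2" using N1 by simp
      have A: "ln (real N) > 0" using N2 by simp
      have B: "\<rho> * real K * real T > 0" using r1 K1 T0 by simp
      have ep: "\<eta> > 0" unfolding \<eta>_def using A B by simp
      have "exp4_regret \<eta> \<Theta> x c P T \<theta>s \<le> ln (real N) / \<eta> + real T * (\<eta> / 2 * \<rho> * real K)"
      proof (rule main_bound[OF fin ts K cb Pa], use ep in simp, intro ballI)
        fix h assume h: "h \<in> set_pmf (exp4_traj \<eta> \<Theta> x c P T)"
        show "(\<Sum>t<T. \<Sum>\<theta>\<in>\<Theta>. Wh \<eta> \<Theta> x c h t \<theta> * Lh \<eta> \<Theta> x c h t \<theta>) - (\<Sum>t<T. Lh \<eta> \<Theta> x c h t \<theta>s)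
         \<le> ln (real N) / \<eta> + \<eta> / 2 * (\<Sum>t<T. \<Sum>\<theta>\<in>\<Theta>. Wh \<eta> \<Theta> x c h t \<theta> * (Lh \<eta> \<Theta> x c h t \<theta>)^2)"
          unfolding N_def
        proof (rule potential[OF fin ts ep])
          show "\<forall>\<theta>\<in>\<Theta>. Wh \<eta> \<Theta> x c h 0 \<theta> = 1 / real (card \<Theta>)" by (simp add: Wh_def)
          show "\<forall>t. \<forall>\<theta>\<in>\<Theta>. Wh \<eta> \<Theta> x c h (Suc t) \<theta> = Wh \<eta> \<Theta> x c h t \<theta> * exp (- \<eta> * Lh \<eta> \<Theta> x c h t \<theta>) /
              (\<Sum>\<theta>'\<in>\<Theta>. Wh \<eta> \<Theta> x c h t \<theta>' * exp (- \<eta> * Lh \<eta> \<Theta> x c h t \<theta>'))"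
            by (simp add: Wh_def Lh_def update_eq observations_def)
          show "\<forall>t<T. \<forall>\<theta>\<in>\<Theta>. 0 \<le> Lh \<eta> \<Theta> x c h t \<theta>"
            using Lh_nonneg[OF fin ne K cb Pb h] by blast
        qed
      qed
      also have "\<dots> \<le> \<rho> powr (1/2) * (2 * sqrt (real K * real T * ln (real N)))"
        unfolding \<eta>_def using final_arith[OF A refl B] r1 by simp
      finally show ?thesis unfolding \<eta>_def .
    qed
  qed
  show "(\<forall>\<theta>\<in>\<Theta>. exp4_regret ((\<lambda>T K N \<rho>. sqrt (2 * ln (real N) / (\<rho> * real K * real T))) T K (card \<Theta>) 1) \<Theta> x c (\<lambda>_ _. 1) T \<theta>
             \<le> 2 * sqrt (real K * real T * ln (real (card \<Theta>))))
      \<and> (\<forall>(\<rho>::real) P. (\<forall>t<T. \<forall>h. 0 < P t h \<and> P t h \<le> 1 \<and> 1 / P t h \<le> \<rho>) \<longrightarrow>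
          (\<forall>\<theta>\<in>\<Theta>. exp4_regret ((\<lambda>T K N \<rho>. sqrt (2 * ln (real N) / (\<rho> * real K * real T))) T K (card \<Theta>) \<rho>) \<Theta> x c P T \<theta>
             \<le> \<rho> powr (1/2) * (2 * sqrt (real K * real T * ln (real (card \<Theta>))))))"
  proof (intro conjI ballI allI impI)
    fix \<theta> assume "\<theta> \<in> \<Theta>"
    then show "exp4_regret ((\<lambda>T K N \<rho>. sqrt (2 * ln (real N) / (\<rho> * real K * real T))) T K (card \<Theta>) 1) \<Theta> x c (\<lambda>_ _. 1) T \<theta>
             \<le> 2 * sqrt (real K * real T * ln (real (card \<Theta>)))"
      using claim[of "\<lambda>_ _. 1" 1 \<theta>] unfolding N_def by simp
  next
    fix \<rho> :: real and P :: "nat \<Rightarrow> 'x round_rec list \<Rightarrow> real" and \<theta> assume "\<forall>t<T. \<forall>h. 0 < P t h \<and> P t h \<le> 1 \<and> 1 / P t h \<le> \<rho>" "\<theta> \<in> \<Theta>"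
    then show "exp4_regret ((\<lambda>T K N \<rho>. sqrt (2 * ln (real N) / (\<rho> * real K * real T))) T K (card \<Theta>) \<rho>) \<Theta> x c P T \<theta>
             \<le> \<rho> powr (1/2) * (2 * sqrt (real K * real T * ln (real (card \<Theta>))))"
      using claim[of P \<rho> \<theta>] unfolding N_def by simp
  qed
qed

end
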